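(* Let $n\geqslant 2$ and $N=2^n-1$. There is a bijection between the set of $n$-tuples $(y_1,\dots,y_n)$ of positive integers and the set of reduced $N$-tuples $(z_1,\dots,z_N)$ of positive integers, such that $$\forall j\in\{1,\dots,n\},\quad y_j=\prod_{1\leqslant h\leqslant N}z_h^{\varepsilon_j(h)}\quad\text{and}\quad \mathrm{lcm}(y_1,\dots,y_n)=\prod_{1\leqslant h\leqslant N}z_h.$$
   Context: For $h\in\{1,\dots,N\}$ write $h=\sum_{j=1}^n\varepsilon_j(h)2^{j-1}$ with $\varepsilon_j(h)\in\{0,1\}$. Write $h\preceq\ell$ if $\varepsilon_j(h)\leqslant\varepsilon_j(\ell)$ for all $j$. An $N$-tuple $(z_1,\dots,z_N)$ is reduced if $\gcd(z_h,z_\ell)=1$ whenever $h\not\preceq\ell$ and $\ell\not\preceq h$. *)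

theory Defs
  imports Main "HOL-Library.FuncSet"
begin

definition eps :: "nat \<Rightarrow> nat \<Rightarrow> nat" where
  "eps j h = (h div 2 ^ (j - 1)) mod 2"

definition preceq :: "nat \<Rightarrow> nat \<Rightarrow> nat \<Rightarrow> bool" where
  "preceq n h l \<longleftrightarrow> (\<forall>j\<in>{1..n}. eps j h \<le> eps j l)"

definition reduced :: "nat \<Rightarrow> (nat \<Rightarrow> nat) \<Rightarrow> bool" where
  "reduced n z \<longleftrightarrow> (\<forall>h\<in>{1..2^n - 1}. \<forall>l\<in>{1..2^n - 1}.
      \<not> preceq n h l \<and> \<not> preceq n l h \<longrightarrow> gcd (z h) (z l) = 1)"

end

theory Submission
  imports Defs "HOL-Computational_Algebra.Primes"
begin

lemma eps_bit: "eps j h = (if bit h (j - 1) then 1 else 0)"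
  unfolding eps_def by (simp add: bit_iff_odd odd_iff_mod_2_eq_one)

lemma eps_le1: "eps j h \<le> 1"
  unfolding eps_def by simp

lemma eps_cases: "eps j h = 0 \<or> eps j h = 1"
  unfolding eps_def by auto

lemma eps_zero [simp]: "eps j 0 = 0"
  unfolding eps_def by simp

definition SS :: "nat \<Rightarrow> nat \<Rightarrow> nat set" where
  "SS n h = {j\<in>{1..n}. eps j h = 1}"

lemma bit_high: "(h::nat) < 2 ^ n \<Longrightarrow> n \<le> m \<Longrightarrow> \<not> bit h m"
proof -
  assume a: "h < 2 ^ n" "n \<le> m"
  have "(2::nat) ^ n \<le> 2 ^ m" using a(2) by simp
  then have "h < 2 ^ m" using a(1) by linarith
  then have "h div 2 ^ m = 0" by simp
  then show ?thesis by (simp add: bit_iff_odd)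
qed

lemma F2:
  assumes "(h::nat) < 2 ^ n" "l < 2 ^ n" "\<forall>j\<in>{1..n}. eps j h = eps j l"
  shows "h = l"
proof -
  have "bit h m = bit l m" for m
  proof (cases "m < n")
    case True
    then have "Suc m \<in> {1..n}" by simp
    then have "eps (Suc m) h = eps (Suc m) l" using assms(3) by blast
    then show ?thesis by (simp add: eps_bit split: if_splits)
  next
    case False
    then show ?thesis using bit_high assms by (meson not_le)
  qed
  then show ?thesis by (simp add: bit_eq_iff)
qed

lemma F1:
  assumes "h \<in> {1..2^n - 1}"
  shows "SS n h \<noteq> {}"
proof
  assume "SS n h = {}"
  then have "\<forall>j\<in>{1..n}. eps j h = eps j 0" unfolding SS_def using eps_cases by fastforce
  moreover have "h < 2 ^ n" using assms by auto
  ultimately have "h = 0" using F2[of h n 0] by simp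
  then show False using assms by simp
qed

lemma F2': "h \<in> {1..2^n - 1} \<Longrightarrow> l \<in> {1..2^n - 1} \<Longrightarrow> SS n h = SS n l \<Longrightarrow> h = l"
proof -
  assume a: "h \<in> {1..2^n - 1}" "l \<in> {1..2^n - 1}" "SS n h = SS n l"
  have "eps j h = eps j l" if "j \<in> {1..n}" for j
  proof -
    have "eps j h = 1 \<longleftrightarrow> eps j l = 1" using a(3) that unfolding SS_def set_eq_iff by blast
    then show ?thesis using eps_cases[of j h] eps_cases[of j l] by auto
  qed
  moreover have "h < 2^n" "l < 2^n" using a by auto
  ultimately show ?thesis using F2 by blast
qed

lemma F3:
  assumes "T \<subseteq> {1..n}" "T \<noteq> {}"
  shows "\<exists>h\<in>{1..2^n - 1}. SS n h = T"
proof -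
  define bs where "bs = map (\<lambda>i. Suc i \<in> T) [0..<n]"
  define h :: nat where "h = horner_sum of_bool 2 bs"
  have hl: "h < 2 ^ n" using horner_sum_of_bool_2_less[of bs] by (simp add: h_def bs_def)
  have e: "eps j h = (if j \<in> T then 1 else 0)" if "j \<in> {1..n}" for j
  proof -
    have "j - 1 < n" "Suc (j - 1) = j" using that by auto
    then have "bit h (j - 1) \<longleftrightarrow> j \<in> T"
      unfolding h_def bit_horner_sum_bit_iff bs_def by simp
    then show ?thesis by (simp add: eps_bit)
  qed
  have SS: "SS n h = T"
  proof (rule set_eqI)
    fix j
    show "j \<in> SS n h \<longleftrightarrow> j \<in> T"
    proof (cases "j \<in> {1..n}")
      case True
      then show ?thesis using e[OF True] unfolding SS_def by simp
    next
      case False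
      then show ?thesis using assms(1) unfolding SS_def by blast
    qed
  qed
  obtain j where "j \<in> T" using assms(2) by blast
  then have "j \<in> {1..n}" using assms(1) by blast
  then have "eps j h = 1" using e \<open>j \<in> T\<close> by simp
  then have "h \<noteq> 0" by (metis eps_zero zero_neq_one)
  then have "h \<in> {1..2^n - 1}" using hl by simp
  then show ?thesis using SS by blast
qed


definition chain_on :: "nat \<Rightarrow> (nat \<Rightarrow> nat) \<Rightarrow> bool" where
  "chain_on n c \<longleftrightarrow> (\<forall>h\<in>{1..2^n - 1}. \<forall>l\<in>{1..2^n - 1}.
      0 < c h \<and> 0 < c l \<longrightarrow> SS n h \<subseteq> SS n l \<or> SS n l \<subseteq> SS n h)"

definition AA :: "nat \<Rightarrow> (nat \<Rightarrow> nat) \<Rightarrow> nat \<Rightarrow> nat" where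
  "AA n c j = (\<Sum>h\<in>{1..2^n - 1}. eps j h * c h)"

lemma AA_ge: "h \<in> {1..2^n - 1} \<Longrightarrow> j \<in> SS n h \<Longrightarrow> c h \<le> AA n c j"
proof -
  assume a: "h \<in> {1..2^n - 1}" "j \<in> SS n h"
  then have "eps j h = 1" by (simp add: SS_def)
  then have "eps j h * c h = c h" by simp
  moreover have "eps j h * c h \<le> AA n c j" unfolding AA_def
    by (rule member_le_sum) (use a in auto)
  ultimately show ?thesis by linarith
qed

lemma AA_pos: "j \<in> {1..n} \<Longrightarrow> 0 < AA n c j \<Longrightarrow> \<exists>h\<in>{1..2^n - 1}. 0 < c h \<and> j \<in> SS n h"
proof -
  assume a: "j \<in> {1..n}" "0 < AA n c j"
  then obtain h where h: "h \<in> {1..2^n - 1}" "eps j h * c h \<noteq> 0" unfolding AA_def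
    by (metis (no_types, lifting) not_gr0 sum.neutral)
  then have "eps j h = 1" "0 < c h" using eps_cases[of j h] by auto
  then show ?thesis using h a by (auto simp: SS_def)
qed

lemma AA_upd:
  assumes "h0 \<in> {1..2^n - 1}"
  shows "AA n (c(h0 := v)) j + eps j h0 * c h0 = AA n c j + eps j h0 * v"
proof -
  have f: "finite {1..2^n - 1::nat}" by simp
  have "AA n c j = eps j h0 * c h0 + (\<Sum>h\<in>{1..2^n - 1} - {h0}. eps j h * c h)"
    unfolding AA_def using sum.remove[OF f assms] .
  moreover have "AA n (c(h0 := v)) j = eps j h0 * v + (\<Sum>h\<in>{1..2^n - 1} - {h0}. eps j h * c h)"
    unfolding AA_def using sum.remove[OF f assms, of "\<lambda>h. eps j h * (c(h0 := v)) h"] by simp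
  ultimately show ?thesis by simp
qed

lemma chain_max:
  assumes "chain_on n c" "\<exists>h\<in>{1..2^n - 1}. 0 < c h"
  shows "\<exists>hk\<in>{1..2^n - 1}. 0 < c hk \<and> (\<forall>h\<in>{1..2^n - 1}. 0 < c h \<longrightarrow> SS n h \<subseteq> SS n hk)"
proof -
  define X where "X = {h\<in>{1..2^n - 1}. 0 < c h}"
  have fX: "finite X" "X \<noteq> {}" using assms(2) unfolding X_def by auto
  define m where "m = Max ((\<lambda>h. card (SS n h)) ` X)"
  have "m \<in> (\<lambda>h. card (SS n h)) ` X" unfolding m_def using fX by (intro Max_in) auto
  then obtain hk where hk: "hk \<in> X" "card (SS n hk) = m" by auto
  have le: "card (SS n h) \<le> m" if "h \<in> X" for h
    unfolding m_def using fX that by (intro Max_ge) auto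
  have fin: "finite (SS n h)" for h unfolding SS_def by auto
  have "SS n h \<subseteq> SS n hk" if "h \<in> X" for h
  proof -
    have "SS n h \<subseteq> SS n hk \<or> SS n hk \<subseteq> SS n h"
      using assms(1) that hk(1) unfolding chain_on_def X_def by blast
    then show ?thesis
    proof
      assume sub: "SS n hk \<subseteq> SS n h"
      have "card (SS n hk) \<le> card (SS n h)" using card_mono[OF fin sub] .
      then have "card (SS n hk) = card (SS n h)" using le[OF that] hk(2) by simp
      then show ?thesis using card_subset_eq[OF fin sub] by simp
    qed
  qed
  then show ?thesis using hk(1) unfolding X_def by blast
qed

lemma chain_min:
  assumes "chain_on n c" "\<exists>h\<in>{1..2^n - 1}. 0 < c h"
  shows "\<exists>h0\<in>{1..2^n - 1}. 0 < c h0 \<and> (\<forall>h\<in>{1..2^n - 1}. 0 < c h \<longrightarrow> SS n h0 \<subseteq> SS n h)"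
proof -
  define X where "X = {h\<in>{1..2^n - 1}. 0 < c h}"
  have fX: "finite X" "X \<noteq> {}" using assms(2) unfolding X_def by auto
  define m where "m = Min ((\<lambda>h. card (SS n h)) ` X)"
  have "m \<in> (\<lambda>h. card (SS n h)) ` X" unfolding m_def using fX by (intro Min_in) auto
  then obtain hk where hk: "hk \<in> X" "card (SS n hk) = m" by auto
  have le: "m \<le> card (SS n h)" if "h \<in> X" for h
    unfolding m_def using fX that by (intro Min_le) auto
  have fin: "finite (SS n h)" for h unfolding SS_def by auto
  have "SS n hk \<subseteq> SS n h" if "h \<in> X" for h
  proof -
    have "SS n h \<subseteq> SS n hk \<or> SS n hk \<subseteq> SS n h"
      using assms(1) that hk(1) unfolding chain_on_def X_def by blast
    then show ?thesis
    proof
      assume sub: "SS n h \<subseteq> SS n hk"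
      have "card (SS n h) \<le> card (SS n hk)" using card_mono[OF fin sub] .
      then have "card (SS n hk) = card (SS n h)" using le[OF that] hk(2) by simp
      then show ?thesis using card_subset_eq[OF fin sub] by simp
    qed
  qed
  then show ?thesis using hk(1) unfolding X_def by blast
qed


lemma sum_upd:
  fixes f :: "'a \<Rightarrow> nat"
  assumes "finite A" "h0 \<in> A"
  shows "sum (f(h0 := v)) A + f h0 = sum f A + v"
proof -
  have "sum f A = f h0 + sum f (A - {h0})" using sum.remove[OF assms] .
  moreover have "sum (f(h0 := v)) A = v + sum f (A - {h0})"
    using sum.remove[OF assms, of "f(h0 := v)"] by simp
  ultimately show ?thesis by simp
qed

lemma chain_mono: "chain_on n c \<Longrightarrow> (\<And>h. d h \<le> c h) \<Longrightarrow> chain_on n d"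
  unfolding chain_on_def by (meson less_le_trans not_le)

lemma AA_zero: "(\<forall>h\<in>{1..2^n - 1}. c h = 0) \<Longrightarrow> AA n c j = 0"
  unfolding AA_def by simp

lemma zero_transfer:
  assumes "\<forall>h\<in>{1..2^n - 1}. c h = 0" "\<forall>j\<in>{1..n}. AA n c j = AA n c' j"
  shows "\<forall>h\<in>{1..2^n - 1}. c' h = 0"
proof (intro ballI)
  fix h :: nat assume h: "h \<in> {1..2^n - 1}"
  show "c' h = 0"
  proof (rule ccontr)
    assume ne: "c' h \<noteq> 0"
    obtain j where j: "j \<in> SS n h" using F1[OF h] by auto
    then have jn: "j \<in> {1..n}" by (simp add: SS_def)
    have "c' h \<le> AA n c' j" using AA_ge[OF h j] .
    moreover have "AA n c j = 0" using AA_zero assms(1) by blast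
    ultimately show False using ne assms(2) jn by simp
  qed
qed

lemma top_char:
  assumes "hk \<in> {1..2^n - 1}" "0 < c hk" "\<forall>h\<in>{1..2^n - 1}. 0 < c h \<longrightarrow> SS n h \<subseteq> SS n hk"
  shows "SS n hk = {j\<in>{1..n}. 0 < AA n c j}"
proof (rule set_eqI)
  fix j :: nat
  show "j \<in> SS n hk \<longleftrightarrow> j \<in> {j\<in>{1..n}. 0 < AA n c j}"
  proof
    assume j: "j \<in> SS n hk"
    have "c hk \<le> AA n c j" using AA_ge[OF assms(1) j] .
    then show "j \<in> {j\<in>{1..n}. 0 < AA n c j}" using j assms(2) by (simp add: SS_def)
  next
    assume "j \<in> {j\<in>{1..n}. 0 < AA n c j}"
    then obtain h where "h \<in> {1..2^n - 1}" "0 < c h" "j \<in> SS n h"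
      using AA_pos by blast
    then show "j \<in> SS n hk" using assms(3) by blast
  qed
qed

lemma chain_unique:
  assumes "chain_on n c" "chain_on n c'" "\<forall>j\<in>{1..n}. AA n c j = AA n c' j"
  shows "\<forall>h\<in>{1..2^n - 1}. c h = c' h"
  using assms
proof (induction "\<Sum>h\<in>{1..2^n - 1}. c h" arbitrary: c c' rule: less_induct)
  case less
  show ?case
  proof (cases "\<exists>h\<in>{1..2^n - 1}. 0 < c h")
    case False
    then have z: "\<forall>h\<in>{1..2^n - 1}. c h = 0" by auto
    then show ?thesis using zero_transfer[OF z less.prems(3)] by simp
  next
    case True
    have True': "\<exists>h\<in>{1..2^n - 1}. 0 < c' h"
    proof (rule ccontr)
      assume "\<not> ?thesis"
      then have z: "\<forall>h\<in>{1..2^n - 1}. c' h = 0" by auto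
      have "\<forall>j\<in>{1..n}. AA n c' j = AA n c j" using less.prems(3) by simp
      from zero_transfer[OF z this] True show False by auto
    qed
    obtain hk where hk: "hk \<in> {1..2^n - 1}" "0 < c hk"
      "\<forall>h\<in>{1..2^n - 1}. 0 < c h \<longrightarrow> SS n h \<subseteq> SS n hk"
      using chain_max[OF less.prems(1) True] by blast
    obtain hk' where hk': "hk' \<in> {1..2^n - 1}" "0 < c' hk'"
      "\<forall>h\<in>{1..2^n - 1}. 0 < c' h \<longrightarrow> SS n h \<subseteq> SS n hk'"
      using chain_max[OF less.prems(2) True'] by blast
    have "SS n hk = SS n hk'"
      using top_char[OF hk] top_char[OF hk'] less.prems(3) by auto
    then have eq: "hk' = hk" using F2' hk(1) hk'(1) by blast
    define d where "d = c(hk := c hk - 1)"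
    define d' where "d' = c'(hk := c' hk - 1)"
    have cd: "chain_on n d" by (rule chain_mono[OF less.prems(1)]) (simp add: d_def)
    have cd': "chain_on n d'" by (rule chain_mono[OF less.prems(2)]) (simp add: d'_def)
    have AAd: "\<forall>j\<in>{1..n}. AA n d j = AA n d' j"
    proof
      fix j :: nat assume j: "j \<in> {1..n}"
      have e1: "AA n d j + eps j hk * c hk = AA n c j + eps j hk * (c hk - 1)"
        unfolding d_def using AA_upd[OF hk(1)] .
      have e2: "AA n d' j + eps j hk * c' hk = AA n c' j + eps j hk * (c' hk - 1)"
        unfolding d'_def using AA_upd[OF hk(1)] .
      have m1: "eps j hk * c hk = eps j hk * (c hk - 1) + eps j hk"
        using hk(2) by (metis Suc_diff_1 mult_Suc_right add.commute)
      have m2: "eps j hk * c' hk = eps j hk * (c' hk - 1) + eps j hk"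
        using hk'(2) eq by (metis Suc_diff_1 mult_Suc_right add.commute)
      show "AA n d j = AA n d' j" using e1 e2 m1 m2 less.prems(3) j by simp
    qed
    have "sum d {1..2^n - 1} + c hk = sum c {1..2^n - 1} + (c hk - 1)"
      unfolding d_def by (rule sum_upd) (use hk in auto)
    then have lt: "sum d {1..2^n - 1} < sum c {1..2^n - 1}" using hk(2) by simp
    have IH: "\<forall>h\<in>{1..2^n - 1}. d h = d' h" using less.hyps[OF lt cd cd' AAd] .
    show ?thesis
    proof
      fix h :: nat assume h: "h \<in> {1..2^n - 1}"
      show "c h = c' h"
      proof (cases "h = hk")
        case True
        then show ?thesis using IH h hk(2) hk'(2) eq unfolding d_def d'_def by force
      next
        case False
        then show ?thesis using IH h unfolding d_def d'_def by force
      qed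
    qed
  qed
qed

lemma chain_exists:
  "\<exists>c. chain_on n c \<and> (\<forall>j\<in>{1..n}. AA n c j = a j)"
proof (induction "\<Sum>j\<in>{1..n}. a j" arbitrary: a rule: less_induct)
  case less
  show ?case
  proof (cases "\<forall>j\<in>{1..n}. a j = 0")
    case True
    have "chain_on n (\<lambda>_. 0)" unfolding chain_on_def by simp
    moreover have "\<forall>j\<in>{1..n}. AA n (\<lambda>_. 0) j = a j" using True AA_zero[of n "\<lambda>_. 0"] by simp
    ultimately show ?thesis by blast
  next
    case False
    define T where "T = {j\<in>{1..n}. 0 < a j}"
    have T: "T \<subseteq> {1..n}" "T \<noteq> {}" using False unfolding T_def by auto
    obtain hT where hT: "hT \<in> {1..2^n - 1}" "SS n hT = T" using F3[OF T] by blast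
    define a' where "a' = (\<lambda>j. a j - (if j \<in> T then 1 else 0))"
    have lt: "(\<Sum>j\<in>{1..n}. a' j) < (\<Sum>j\<in>{1..n}. a j)"
    proof (rule sum_strict_mono_ex1)
      show "finite {1..n}" by simp
      show "\<forall>x\<in>{1..n}. a' x \<le> a x" unfolding a'_def by simp
      obtain j where "j \<in> T" using T by blast
      then show "\<exists>x\<in>{1..n}. a' x < a x" unfolding a'_def T_def by auto
    qed
    obtain c' where c': "chain_on n c'" "\<forall>j\<in>{1..n}. AA n c' j = a' j"
      using less.hyps[OF lt] by blast
    define c where "c = c'(hT := c' hT + 1)"
    have supp: "SS n h \<subseteq> T" if h: "h \<in> {1..2^n - 1}" "0 < c' h" for h
    proof
      fix j :: nat assume j: "j \<in> SS n h"
      then have jn: "j \<in> {1..n}" by (simp add: SS_def)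
      have "c' h \<le> AA n c' j" using AA_ge[OF h(1) j] .
      then have "0 < a' j" using c'(2) jn h(2) by simp
      then have "0 < a j" unfolding a'_def by simp
      then show "j \<in> T" using jn unfolding T_def by simp
    qed
    have ch: "chain_on n c"
      unfolding chain_on_def
    proof (intro ballI impI)
      fix h l :: nat assume h: "h \<in> {1..2^n - 1}" and l: "l \<in> {1..2^n - 1}" and p: "0 < c h \<and> 0 < c l"
      show "SS n h \<subseteq> SS n l \<or> SS n l \<subseteq> SS n h"
      proof (cases "h = hT")
        case True
        show ?thesis
        proof (cases "l = hT")
          case True
          then show ?thesis using \<open>h = hT\<close> by simp
        next
          case False
          then have "0 < c' l" using p unfolding c_def by simp
          then show ?thesis using supp[OF l] hT(2) True by simp
        qed
      next
        case False
        then have ch': "0 < c' h" using p unfolding c_def by simp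
        show ?thesis
        proof (cases "l = hT")
          case True
          then show ?thesis using supp[OF h ch'] hT(2) by simp
        next
          case False
          then have "0 < c' l" using p unfolding c_def by simp
          then show ?thesis using c'(1) h l ch' unfolding chain_on_def by blast
        qed
      qed
    qed
    have "AA n c j = a j" if j: "j \<in> {1..n}" for j
    proof -
      have e: "AA n c j + eps j hT * c' hT = AA n c' j + eps j hT * (c' hT + 1)"
        unfolding c_def using AA_upd[OF hT(1)] .
      have "eps j hT = (if j \<in> T then 1 else 0)"
        using hT(2) j eps_cases[of j hT] unfolding SS_def by auto
      then show ?thesis using e c'(2) j unfolding a'_def T_def by (auto split: if_splits)
    qed
    then show ?thesis using ch by blast
  qed
qed


lemma preceq_iff: "preceq n h l \<longleftrightarrow> SS n h \<subseteq> SS n l"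
proof -
  have "eps j h \<le> eps j l \<longleftrightarrow> (eps j h = 1 \<longrightarrow> eps j l = 1)" for j
    using eps_cases[of j h] eps_cases[of j l] by auto
  then show ?thesis unfolding preceq_def SS_def by auto
qed

lemma AA_cong: "(\<And>h. h \<in> {1..2^n - 1} \<Longrightarrow> c h = d h) \<Longrightarrow> AA n c j = AA n d j"
  unfolding AA_def by (rule sum.cong) auto

lemma mult_g:
  fixes z :: "nat \<Rightarrow> nat"
  assumes "\<And>h. h \<in> {1..2^n - 1} \<Longrightarrow> 0 < z h" "prime p"
  shows "multiplicity p (\<Prod>h\<in>{1..2^n - 1}. z h ^ eps j h) = AA n (\<lambda>h. multiplicity p (z h)) j"
proof -
  have "multiplicity p (\<Prod>h\<in>{1..2^n - 1}. z h ^ eps j h) =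
        (\<Sum>h\<in>{1..2^n - 1}. multiplicity p (z h ^ eps j h))"
    by (rule prime_elem_multiplicity_prod_distrib) (use assms in \<open>auto simp: image_iff\<close>)
  also have "\<dots> = (\<Sum>h\<in>{1..2^n - 1}. eps j h * multiplicity p (z h))"
    by (rule sum.cong) (use assms in \<open>auto intro: prime_elem_multiplicity_power_distrib\<close>)
  finally show ?thesis unfolding AA_def .
qed

lemma reduced_chain:
  fixes z :: "nat \<Rightarrow> nat"
  assumes "reduced n z" "\<And>h. h \<in> {1..2^n - 1} \<Longrightarrow> 0 < z h" "prime p"
  shows "chain_on n (\<lambda>h. multiplicity p (z h))"
  unfolding chain_on_def
proof (intro ballI impI)
  fix h l :: nat assume h: "h \<in> {1..2^n - 1}" and l: "l \<in> {1..2^n - 1}"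
    and m: "0 < multiplicity p (z h) \<and> 0 < multiplicity p (z l)"
  have "p dvd z h" "p dvd z l" using m assms(2)[OF h] assms(2)[OF l] assms(3)
    prime_multiplicity_gt_zero_iff[of p] by (auto simp: prime_imp_prime_elem)
  then have "p dvd gcd (z h) (z l)" by simp
  have "gcd (z h) (z l) \<noteq> 1"
  proof
    assume "gcd (z h) (z l) = 1"
    then have "p dvd 1" using \<open>p dvd gcd (z h) (z l)\<close> by simp
    then have "p = 1" by simp
    then show False using assms(3) by simp
  qed
  then have "preceq n h l \<or> preceq n l h" using assms(1) h l unfolding reduced_def by blast
  then show "SS n h \<subseteq> SS n l \<or> SS n l \<subseteq> SS n h" by (simp add: preceq_iff)
qed

lemma chain_top_j:
  assumes "chain_on n c"
  shows "(\<Sum>h\<in>{1..2^n - 1}. c h) = 0 \<or> (\<exists>j\<in>{1..n}. AA n c j = (\<Sum>h\<in>{1..2^n - 1}. c h))"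
proof (cases "\<exists>h\<in>{1..2^n - 1}. 0 < c h")
  case False
  then show ?thesis by simp
next
  case True
  obtain h0 where h0: "h0 \<in> {1..2^n - 1}" "0 < c h0"
      "\<forall>h\<in>{1..2^n - 1}. 0 < c h \<longrightarrow> SS n h0 \<subseteq> SS n h"
    using chain_min[OF assms True] by blast
  obtain j where j: "j \<in> SS n h0" using F1[OF h0(1)] by auto
  have "eps j h * c h = c h" if "h \<in> {1..2^n - 1}" for h
  proof (cases "c h = 0")
    case False
    then have "j \<in> SS n h" using h0(3)[rule_format, OF that] j by auto
    then show ?thesis by (simp add: SS_def)
  qed simp
  then have "AA n c j = (\<Sum>h\<in>{1..2^n - 1}. c h)" unfolding AA_def by (rule sum.cong[OF refl])
  moreover have "j \<in> {1..n}" using j by (simp add: SS_def)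
  ultimately show ?thesis by blast
qed

definition gg :: "nat \<Rightarrow> (nat \<Rightarrow> nat) \<Rightarrow> nat \<Rightarrow> nat" where
  "gg n z = restrict (\<lambda>j. \<Prod>h\<in>{1..2^n - 1}. z h ^ eps j h) {1..n}"

lemma gg_in:
  assumes "z \<in> {1..2^n - 1} \<rightarrow>\<^sub>E {x::nat. x > 0}"
  shows "gg n z \<in> {1..n} \<rightarrow>\<^sub>E {y::nat. y > 0}"
proof -
  have "0 < (\<Prod>h\<in>{1..2^n - 1}. z h ^ eps j h)" for j
    using assms by (intro prod_pos) auto
  then show ?thesis unfolding gg_def by auto
qed

lemma gg_inj:
  "inj_on (gg n) {z \<in> {1..2^n - 1} \<rightarrow>\<^sub>E {x::nat. x > 0}. reduced n z}"
proof (rule inj_onI)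
  fix z z' assume z: "z \<in> {z \<in> {1..2^n - 1} \<rightarrow>\<^sub>E {x::nat. x > 0}. reduced n z}"
    and z': "z' \<in> {z \<in> {1..2^n - 1} \<rightarrow>\<^sub>E {x::nat. x > 0}. reduced n z}"
    and eq: "gg n z = gg n z'"
  have zP: "z \<in> {1..2^n - 1} \<rightarrow>\<^sub>E {x::nat. x > 0}" and rz: "reduced n z" using z by simp_all
  have zP': "z' \<in> {1..2^n - 1} \<rightarrow>\<^sub>E {x::nat. x > 0}" and rz': "reduced n z'" using z' by simp_all
  have pz: "\<And>h. h \<in> {1..2^n - 1} \<Longrightarrow> 0 < z h" using zP by (simp add: PiE_iff)
  have pz': "\<And>h. h \<in> {1..2^n - 1} \<Longrightarrow> 0 < z' h" using zP' by (simp add: PiE_iff)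
  have "z h = z' h" if h: "h \<in> {1..2^n - 1}" for h
  proof -
    have "normalize (z h) = normalize (z' h)"
    proof (rule multiplicity_eq_imp_eq)
      show "z h \<noteq> 0" "z' h \<noteq> 0" using pz[OF h] pz'[OF h] by auto
      fix p :: nat assume p: "prime p"
      have "\<forall>j\<in>{1..n}. AA n (\<lambda>h. multiplicity p (z h)) j = AA n (\<lambda>h. multiplicity p (z' h)) j"
      proof
        fix j :: nat assume j: "j \<in> {1..n}"
        have "gg n z j = gg n z' j" using eq by simp
        then have "(\<Prod>h\<in>{1..2^n - 1}. z h ^ eps j h) = (\<Prod>h\<in>{1..2^n - 1}. z' h ^ eps j h)"
          using j unfolding gg_def by simp
        moreover have "multiplicity p (\<Prod>h\<in>{1..2^n - 1}. z h ^ eps j h) = AA n (\<lambda>h. multiplicity p (z h)) j"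
          by (rule mult_g) (use pz p in auto)
        moreover have "multiplicity p (\<Prod>h\<in>{1..2^n - 1}. z' h ^ eps j h) = AA n (\<lambda>h. multiplicity p (z' h)) j"
          by (rule mult_g) (use pz' p in auto)
        ultimately show "AA n (\<lambda>h. multiplicity p (z h)) j = AA n (\<lambda>h. multiplicity p (z' h)) j"
          by simp
      qed
      from chain_unique[OF reduced_chain[OF rz pz p] reduced_chain[OF rz' pz' p] this] h
      show "multiplicity p (z h) = multiplicity p (z' h)" by blast
    qed
    then show ?thesis by simp
  qed
  moreover have "z h = z' h" if h: "h \<notin> {1..2^n - 1}" for h
    using PiE_arb[OF zP h] PiE_arb[OF zP' h] by simp
  ultimately show "z = z'" by blast
qed


lemma gg_surj:
  assumes y: "y \<in> {1..n} \<rightarrow>\<^sub>E {y::nat. y > 0}"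
  shows "\<exists>z\<in>{z \<in> {1..2^n - 1} \<rightarrow>\<^sub>E {x::nat. x > 0}. reduced n z}. gg n z = y"
proof -
  have py: "0 < y j" if "j \<in> {1..n}" for j using y that by (simp add: PiE_iff)
  define P where "P = (\<Union>j\<in>{1..n}. prime_factors (y j))"
  have fP: "finite P" unfolding P_def by simp
  have pP: "\<And>q. q \<in> P \<Longrightarrow> prime q" unfolding P_def by (auto intro: in_prime_factors_imp_prime)
  have "\<forall>p. \<exists>c. chain_on n c \<and> (\<forall>j\<in>{1..n}. AA n c j = multiplicity p (y j))"
  proof
    fix p :: nat
    show "\<exists>c. chain_on n c \<and> (\<forall>j\<in>{1..n}. AA n c j = multiplicity p (y j))"
      using chain_exists[of n "\<lambda>j. multiplicity p (y j)"] by simp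
  qed
  then obtain C where C: "\<And>p. chain_on n (C p)" "\<And>p j. j \<in> {1..n} \<Longrightarrow> AA n (C p) j = multiplicity p (y j)"
    by metis
  define z where "z = restrict (\<lambda>h. \<Prod>p\<in>P. p ^ C p h) {1..2^n - 1}"
  have zpos: "0 < z h" if "h \<in> {1..2^n - 1}" for h
  proof -
    have "0 < (\<Prod>p\<in>P. p ^ C p h)" using pP by (intro prod_pos) (auto simp: prime_gt_0_nat)
    then show ?thesis using that unfolding z_def by simp
  qed
  have mz: "multiplicity q (z h) = (if q \<in> P then C q h else 0)"
    if "h \<in> {1..2^n - 1}" "prime q" for h q
    using that unfolding z_def by (simp add: multiplicity_prod_prime_powers[OF fP pP])
  have zP: "z \<in> {1..2^n - 1} \<rightarrow>\<^sub>E {x::nat. x > 0}"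
    using zpos unfolding z_def by (auto simp: PiE_iff)
  have red: "reduced n z"
    unfolding reduced_def
  proof (intro ballI impI)
    fix h l assume h: "h \<in> {1..2^n - 1}" and l: "l \<in> {1..2^n - 1}"
      and np: "\<not> preceq n h l \<and> \<not> preceq n l h"
    show "gcd (z h) (z l) = 1"
    proof (rule ccontr)
      assume "gcd (z h) (z l) \<noteq> 1"
      then obtain q where q: "prime q" "q dvd gcd (z h) (z l)" using prime_factor_nat by blast
      then have "q dvd z h" "q dvd z l" by auto
      then have "0 < multiplicity q (z h)" "0 < multiplicity q (z l)"
        using zpos[OF h] zpos[OF l] q(1) prime_multiplicity_gt_zero_iff[of q]
        by (auto simp: prime_imp_prime_elem)
      then have "q \<in> P" "0 < C q h" "0 < C q l" using mz[OF h q(1)] mz[OF l q(1)]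
        by (auto split: if_splits)
      then have "SS n h \<subseteq> SS n l \<or> SS n l \<subseteq> SS n h"
        using C(1)[of q] h l unfolding chain_on_def by blast
      then show False using np by (simp add: preceq_iff)
    qed
  qed
  have "gg n z j = y j" for j
  proof (cases "j \<in> {1..n}")
    case False
    have "gg n z j = undefined" unfolding gg_def unfolding restrict_def by (simp only: if_not_P[OF False])
    then show ?thesis using PiE_arb[OF y False] by simp
  next
    case True
    have "normalize (\<Prod>h\<in>{1..2^n - 1}. z h ^ eps j h) = normalize (y j)"
    proof (rule multiplicity_eq_imp_eq)
      show "(\<Prod>h\<in>{1..2^n - 1}. z h ^ eps j h) \<noteq> 0" using zpos
        by (simp add: prod_pos)
      show "y j \<noteq> 0" using py[OF True] by simp
      fix q :: nat assume q: "prime q"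
      have "multiplicity q (\<Prod>h\<in>{1..2^n - 1}. z h ^ eps j h) = AA n (\<lambda>h. multiplicity q (z h)) j"
        by (rule mult_g) (use zpos q in auto)
      also have "\<dots> = AA n (\<lambda>h. if q \<in> P then C q h else 0) j"
        by (rule AA_cong) (use mz q in auto)
      also have "\<dots> = multiplicity q (y j)"
      proof (cases "q \<in> P")
        case True
        then show ?thesis using C(2)[OF \<open>j \<in> {1..n}\<close>] by simp
      next
        case False
        have "AA n (\<lambda>h. 0) j = 0" using AA_zero[of n "\<lambda>h. 0"] by simp
        moreover have "\<not> q dvd y j"
        proof
          assume "q dvd y j"
          then have "q \<in> prime_factors (y j)" using q py[OF True] by (simp add: in_prime_factors_iff)
          then show False using False True unfolding P_def by blast
        qed
        then have "multiplicity q (y j) = 0" by (simp add: not_dvd_imp_multiplicity_0)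
        ultimately show ?thesis using False by simp
      qed
      finally show "multiplicity q (\<Prod>h\<in>{1..2^n - 1}. z h ^ eps j h) = multiplicity q (y j)" .
    qed
    then show ?thesis using True unfolding gg_def by simp
  qed
  then have "gg n z = y" by blast
  then show ?thesis using zP red by blast
qed

lemma gg_lcm:
  assumes z: "z \<in> {z \<in> {1..2^n - 1} \<rightarrow>\<^sub>E {x::nat. x > 0}. reduced n z}"
  shows "Lcm (gg n z ` {1..n}) = (\<Prod>h\<in>{1..2^n - 1}. z h)"
proof -
  have zP: "z \<in> {1..2^n - 1} \<rightarrow>\<^sub>E {x::nat. x > 0}" and rz: "reduced n z" using z by simp_all
  have pz: "\<And>h. h \<in> {1..2^n - 1} \<Longrightarrow> 0 < z h" using zP by (simp add: PiE_iff)
  show ?thesis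
  proof (rule Lcm_eqI)
    show "normalize (\<Prod>h\<in>{1..2^n - 1}. z h) = (\<Prod>h\<in>{1..2^n - 1}. z h)" by simp
  next
    fix b assume "b \<in> gg n z ` {1..n}"
    then obtain j where j: "j \<in> {1..n}" "b = (\<Prod>h\<in>{1..2^n - 1}. z h ^ eps j h)"
      unfolding gg_def by auto
    have "z h ^ eps j h dvd z h" for h
      using eps_cases[of j h] by auto
    then show "b dvd (\<Prod>h\<in>{1..2^n - 1}. z h)" unfolding j(2) by (rule prod_dvd_prod)
  next
    fix c assume dv: "\<And>b. b \<in> gg n z ` {1..n} \<Longrightarrow> b dvd c"
    show "(\<Prod>h\<in>{1..2^n - 1}. z h) dvd c"
    proof (cases "c = 0")
      case True then show ?thesis by simp
    next
      case False
      show ?thesis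
      proof (rule multiplicity_le_imp_dvd)
        show "(\<Prod>h\<in>{1..2^n - 1}. z h) \<noteq> 0" using pz by (simp add: prod_pos)
        fix p :: nat assume p: "prime p"
        have eqP: "multiplicity p (\<Prod>h\<in>{1..2^n - 1}. z h) = (\<Sum>h\<in>{1..2^n - 1}. multiplicity p (z h))"
          by (rule prime_elem_multiplicity_prod_distrib) (use p pz in \<open>auto simp: image_iff\<close>)
        from chain_top_j[OF reduced_chain[OF rz pz p]]
        show "multiplicity p (\<Prod>h\<in>{1..2^n - 1}. z h) \<le> multiplicity p c"
        proof
          assume "(\<Sum>h\<in>{1..2^n - 1}. multiplicity p (z h)) = 0"
          then show ?thesis using eqP by simp
        next
          assume "\<exists>j\<in>{1..n}. AA n (\<lambda>h. multiplicity p (z h)) j = (\<Sum>h\<in>{1..2^n - 1}. multiplicity p (z h))"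
          then obtain j where j: "j \<in> {1..n}"
            "AA n (\<lambda>h. multiplicity p (z h)) j = (\<Sum>h\<in>{1..2^n - 1}. multiplicity p (z h))" by blast
          have m: "multiplicity p (\<Prod>h\<in>{1..2^n - 1}. z h ^ eps j h) = AA n (\<lambda>h. multiplicity p (z h)) j"
            by (rule mult_g) (use pz p in auto)
          have "gg n z j \<in> gg n z ` {1..n}" using j(1) by blast
          then have "(\<Prod>h\<in>{1..2^n - 1}. z h ^ eps j h) dvd c" using dv j(1) unfolding gg_def by force
          then have "multiplicity p (\<Prod>h\<in>{1..2^n - 1}. z h ^ eps j h) \<le> multiplicity p c"
            using False by (rule dvd_imp_multiplicity_le)
          then show ?thesis using m j(2) eqP by simp
        qed
      qed
    qed
  qed
qed

theorem mainTheorem2: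
  fixes n N :: nat
  assumes "n \<ge> 2" and "N = 2 ^ n - 1"
  shows "\<exists>f. bij_betw f ({1..n} \<rightarrow>\<^sub>E {y::nat. y > 0})
                 {z \<in> {1..N} \<rightarrow>\<^sub>E {x::nat. x > 0}. reduced n z}
           \<and> (\<forall>y \<in> {1..n} \<rightarrow>\<^sub>E {y::nat. y > 0}.
                 (\<forall>j\<in>{1..n}. y j = (\<Prod>h\<in>{1..N}. (f y h) ^ eps j h))
               \<and> Lcm (y ` {1..n}) = (\<Prod>h\<in>{1..N}. f y h))"
proof -
  define Z where "Z = {z \<in> {1..2^n - 1} \<rightarrow>\<^sub>E {x::nat. x > 0}. reduced n z}"
  define Y where "Y = {1..n} \<rightarrow>\<^sub>E {y::nat. y > 0}"
  have gZ: "gg n ` Z = Y"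
  proof
    show "gg n ` Z \<subseteq> Y"
    proof
      fix y assume "y \<in> gg n ` Z"
      then obtain z where "z \<in> Z" "y = gg n z" by blast
      then show "y \<in> Y" unfolding Z_def Y_def using gg_in[of z n] by simp
    qed
    show "Y \<subseteq> gg n ` Z"
    proof
      fix y assume "y \<in> Y"
      then obtain z where "z \<in> Z" "gg n z = y" unfolding Z_def Y_def using gg_surj[of y n] by blast
      then show "y \<in> gg n ` Z" by (metis image_eqI)
    qed
  qed
  have "inj_on (gg n) Z" unfolding Z_def by (rule gg_inj)
  then have bij: "bij_betw (gg n) Z Y" unfolding bij_betw_def using gZ by simp
  define f where "f = inv_into Z (gg n)"
  have bf: "bij_betw f Y Z" unfolding f_def by (rule bij_betw_inv_into[OF bij])
  have props: "(\<forall>j\<in>{1..n}. y j = (\<Prod>h\<in>{1..2^n - 1}. (f y h) ^ eps j h))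
               \<and> Lcm (y ` {1..n}) = (\<Prod>h\<in>{1..2^n - 1}. f y h)" if y: "y \<in> Y" for y
  proof -
    have yim: "y \<in> gg n ` Z" using y gZ by simp
    have fZ: "f y \<in> Z" unfolding f_def by (rule inv_into_into[OF yim])
    have gf: "gg n (f y) = y" unfolding f_def by (rule f_inv_into_f[OF yim])
    have "y j = (\<Prod>h\<in>{1..2^n - 1}. (f y h) ^ eps j h)" if "j \<in> {1..n}" for j
    proof -
      have "gg n (f y) j = (\<Prod>h\<in>{1..2^n - 1}. (f y h) ^ eps j h)"
        using that unfolding gg_def by simp
      then show ?thesis using gf by simp
    qed
    moreover have "Lcm (y ` {1..n}) = (\<Prod>h\<in>{1..2^n - 1}. f y h)"
      using gg_lcm[of "f y" n] fZ gf unfolding Z_def by simp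
    ultimately show ?thesis by blast
  qed
  have "bij_betw f Y Z \<and> (\<forall>y\<in>Y. (\<forall>j\<in>{1..n}. y j = (\<Prod>h\<in>{1..2^n - 1}. (f y h) ^ eps j h))
               \<and> Lcm (y ` {1..n}) = (\<Prod>h\<in>{1..2^n - 1}. f y h))" using bf props by simp
  then have "\<exists>f. bij_betw f Y Z \<and> (\<forall>y\<in>Y. (\<forall>j\<in>{1..n}. y j = (\<Prod>h\<in>{1..2^n - 1}. (f y h) ^ eps j h))
               \<and> Lcm (y ` {1..n}) = (\<Prod>h\<in>{1..2^n - 1}. f y h))" by (rule exI[of _ f])
  then show ?thesis unfolding Y_def Z_def assms(2) .
qed

end
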